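(* Let $t_j^i=\binom{i}{j}$ for $0\le j\le i$ (Pascal's triangle), and let $b_n=\sum_{i=0}^{n}\sum_{j=0}^{i}\binom{n}{j,\,n-i,\,i-j}t_j^i$ be its tetrahedron coefficient transform. Then for all $n\ge 0$, $$b_n=\sum_{\ell=0}^{n}\binom{n}{\ell}\binom{2\ell}{\ell},$$ i.e., $(b_n)$ is the binomial transform of the central binomial coefficients.
   Context: For non-negative integers $p,q,r$ with $p+q+r=n$, $\binom{n}{p,q,r}=\frac{n!}{p!\,q!\,r!}$ denotes the tetrahedron trinomial coefficient. The binomial transform of a sequence $(a_\ell)$ is the sequence $\sum_{\ell=0}^n\binom{n}{\ell}a_\ell$. *)

theory Defs
  imports Main
begin

text \<open>Trinomial (tetrahedron) coefficient n!/(p! q! r!), used only when p+q+r = n.\<close>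
definition trinomial :: "nat \<Rightarrow> nat \<Rightarrow> nat \<Rightarrow> nat \<Rightarrow> nat" where
  "trinomial n p q r = fact n div (fact p * fact q * fact r)"

definition pascal_t :: "nat \<Rightarrow> nat \<Rightarrow> nat" where
  "pascal_t i j = i choose j"

definition tetra_b :: "nat \<Rightarrow> nat" where
  "tetra_b n = (\<Sum>i=0..n. \<Sum>j=0..i. trinomial n j (n - i) (i - j) * pascal_t i j)"

end

theory Submission
  imports Defs
begin

lemma tri_eq:
  assumes "j \<le> i" "i \<le> n"
  shows "trinomial n j (n - i) (i - j) = (n choose i) * (i choose j)"
proof -
  have a: "fact i * fact (n - i) * (n choose i) = (fact n :: nat)"
    using binomial_fact_lemma[OF assms(2)] by simp
  have b: "fact j * fact (i - j) * (i choose j) = (fact i :: nat)"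
    using binomial_fact_lemma[OF assms(1)] by simp
  have c: "fact n = (fact j * fact (n - i) * fact (i - j)) * ((n choose i) * (i choose j))"
    using a b by (metis mult.commute mult.left_commute)
  have "(fact j * fact (n - i) * fact (i - j) :: nat) > 0" by simp
  then show ?thesis unfolding trinomial_def c by simp
qed

theorem theorem10:
  fixes n :: nat
  shows "tetra_b n = (\<Sum>l=0..n. (n choose l) * ((2 * l) choose l))"
proof -
  have "tetra_b n = (\<Sum>i=0..n. (n choose i) * (\<Sum>j=0..i. (i choose j)^2))"
    unfolding tetra_b_def pascal_t_def
    by (intro sum.cong refl) (simp add: tri_eq sum_distrib_left power2_eq_square mult.assoc)
  also have "\<dots> = (\<Sum>l=0..n. (n choose l) * ((2 * l) choose l))"
    using choose_square_sum by (simp add: atLeast0AtMost)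
  finally show ?thesis .
qed

end
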